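(* For $i=1,2$ let $G_i\subseteq U(n_i)$ be a finite unitary reflection group and $E_i\subseteq\mathbb C^{n_i}$ a good bounded $G_i$-invariant domain. Then $E_1\times E_2\subseteq\mathbb C^{n_1}\times\mathbb C^{n_2}$ is a good $(G_1\times G_2)$-invariant domain, where $G_1\times G_2=\{g_1\oplus g_2: g_i\in G_i\}\subseteq U(n_1+n_2)$.
   Context: A reflection is an element of $U(n)$ of finite order whose fixed point set is a hyperplane (its reflecting hyperplane); a finite unitary reflection group $G$ is a finite subgroup of $U(n)$ generated by reflections; $\mathcal R_G$ is its set of reflecting hyperplanes. A bounded $G$-invariant domain $E$ is good if for every $Y\in\mathcal R_G$, $Y\cap E$ is connected and $Y\cap bE=b_Y(Y\cap E)$, where $b_Y$ denotes the topological boundary relative to $Y$. *)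

theory Defs
  imports "HOL-Analysis.Analysis"
begin

type_synonym 'n cmat = "complex^'n^'n"

definition ctrans :: "('n::finite) cmat \<Rightarrow> 'n cmat" where
  "ctrans A = (\<chi> i j. cnj (A $ j $ i))"

definition unitary :: "('n::finite) cmat \<Rightarrow> bool" where
  "unitary A \<longleftrightarrow> A ** ctrans A = mat 1"

definition fixset :: "('n::finite) cmat \<Rightarrow> (complex^'n) set" where
  "fixset A = {x. A *v x = x}"

text \<open>Complex hyperplane through the origin: kernel of a nonzero complex linear functional.\<close>
definition chyperplane :: "(complex^('n::finite)) set \<Rightarrow> bool" where
  "chyperplane Y \<longleftrightarrow> (\<exists>a. a \<noteq> 0 \<and> Y = {x. (\<Sum>i\<in>UNIV. a $ i * x $ i) = 0})"

definition reflection :: "('n::finite) cmat \<Rightarrow> bool" where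
  "reflection A \<longleftrightarrow> unitary A \<and> (\<exists>k>0. ((*v) A ^^ k) = id) \<and> chyperplane (fixset A)"

inductive_set mat_gen :: "('n::finite) cmat set \<Rightarrow> 'n cmat set" for S where
  one: "mat 1 \<in> mat_gen S"
| base: "A \<in> S \<Longrightarrow> A \<in> mat_gen S"
| mult: "A \<in> mat_gen S \<Longrightarrow> B \<in> mat_gen S \<Longrightarrow> A ** B \<in> mat_gen S"
| inv: "A \<in> mat_gen S \<Longrightarrow> matrix_inv A \<in> mat_gen S"

definition finite_unitary_reflection_group :: "('n::finite) cmat set \<Rightarrow> bool" where
  "finite_unitary_reflection_group G \<longleftrightarrow>
     finite G \<and> (\<forall>g\<in>G. unitary g) \<and> G = mat_gen {g\<in>G. reflection g}"

definition reflecting_hyperplanes :: "('n::finite) cmat set \<Rightarrow> (complex^'n) set set" where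
  "reflecting_hyperplanes G = {fixset g | g. g \<in> G \<and> reflection g}"

definition domain :: "(complex^('n::finite)) set \<Rightarrow> bool" where
  "domain E \<longleftrightarrow> open E \<and> connected E \<and> E \<noteq> {}"

definition invariant :: "('n::finite) cmat set \<Rightarrow> (complex^'n) set \<Rightarrow> bool" where
  "invariant G E \<longleftrightarrow> (\<forall>g\<in>G. (*v) g ` E = E)"

definition good :: "('n::finite) cmat set \<Rightarrow> (complex^'n) set \<Rightarrow> bool" where
  "good G E \<longleftrightarrow> bounded E \<and> domain E \<and> invariant G E \<and>
     (\<forall>Y\<in>reflecting_hyperplanes G. connected (Y \<inter> E) \<and>
        Y \<inter> frontier E = (subtopology euclidean Y) frontier_of (Y \<inter> E))"

definition block_diag :: "('n::finite) cmat \<Rightarrow> ('m::finite) cmat \<Rightarrow> ('n + 'm) cmat" where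
  "block_diag A B = (\<chi> i j. case (i, j) of
       (Inl a, Inl b) \<Rightarrow> A $ a $ b
     | (Inr a, Inr b) \<Rightarrow> B $ a $ b
     | _ \<Rightarrow> 0)"

definition prod_group :: "('n::finite) cmat set \<Rightarrow> ('m::finite) cmat set \<Rightarrow> ('n + 'm) cmat set" where
  "prod_group G1 G2 = {block_diag g1 g2 | g1 g2. g1 \<in> G1 \<and> g2 \<in> G2}"

definition prod_set :: "(complex^('n::finite)) set \<Rightarrow> (complex^('m::finite)) set \<Rightarrow> (complex^('n + 'm)) set" where
  "prod_set E1 E2 = {x. (\<chi> i. x $ Inl i) \<in> E1 \<and> (\<chi> i. x $ Inr i) \<in> E2}"

end

theory Submission
  imports Defs
begin


definition lft :: "complex^('n::finite+'m::finite) \<Rightarrow> complex^'n" where "lft x = (\<chi> i. x $ Inl i)"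
definition rgt :: "complex^('n::finite+'m::finite) \<Rightarrow> complex^'m" where "rgt x = (\<chi> i. x $ Inr i)"
definition jn :: "(complex^('n::finite)) \<times> (complex^('m::finite)) \<Rightarrow> complex^('n+'m)" where
  "jn p = (\<chi> i. case i of Inl a \<Rightarrow> fst p $ a | Inr b \<Rightarrow> snd p $ b)"
definition spl :: "complex^('n::finite+'m::finite) \<Rightarrow> (complex^'n) \<times> (complex^'m)" where
  "spl x = (lft x, rgt x)"

lemma lft_jn[simp]: "lft (jn (u,v)) = u" by (simp add: lft_def jn_def vec_eq_iff)
lemma rgt_jn[simp]: "rgt (jn (u,v)) = v" by (simp add: rgt_def jn_def vec_eq_iff)
lemma jn_spl[simp]: "jn (lft x, rgt x) = x"
  by (simp add: lft_def rgt_def jn_def vec_eq_iff split: sum.split)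
lemma jn_inj[simp]: "jn (u,v) = jn (u',v') \<longleftrightarrow> u = u' \<and> v = v'"
  by (metis lft_jn rgt_jn)
lemma inj_jn: "inj jn" by (auto simp: inj_def)

lemma prod_set_jn: "prod_set A B = jn ` (A \<times> B)"
proof -
  have "x \<in> jn ` (A \<times> B)" if "lft x \<in> A" "rgt x \<in> B" for x
    using that by (metis SigmaI image_eqI jn_spl)
  then show ?thesis
    by (auto simp: prod_set_def lft_def[symmetric] rgt_def[symmetric])
qed

lemma cont_jn: "continuous_on UNIV jn"
  unfolding jn_def
  apply (intro continuous_on_vec_lambda)
  subgoal for i by (cases i) (auto intro!: continuous_intros)
  done

lemma cont_spl: "continuous_on UNIV spl"
  unfolding spl_def lft_def rgt_def
  by (intro continuous_intros continuous_on_vec_lambda)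

lemma homeo_jn: "homeomorphic_map euclidean euclidean jn"
proof -
  have "homeomorphic_maps euclidean euclidean jn spl"
    unfolding homeomorphic_maps_def using cont_jn cont_spl
    by (auto simp: spl_def)
  then show ?thesis using homeomorphic_map_maps by blast
qed


definition cond :: "'a::topological_space set \<Rightarrow> 'a set \<Rightarrow> bool" where
  "cond Y E \<longleftrightarrow> connected (Y \<inter> E) \<and> Y \<inter> frontier E = (subtopology euclidean Y) frontier_of (Y \<inter> E)"

lemma cond_UNIV: "connected E \<Longrightarrow> cond UNIV E"
  by (simp add: cond_def)

lemma frontier_of_Times:
  "(prod_topology X Y) frontier_of (S \<times> T) =
     (X frontier_of S) \<times> (Y closure_of T) \<union> (X closure_of S) \<times> (Y frontier_of T)"
  unfolding frontier_of_def closure_of_Times interior_of_Times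
  using interior_of_subset_closure_of[of X S] interior_of_subset_closure_of[of Y T]
  by blast

lemma cond_closure:
  assumes "open E" "cond Y E"
  shows "Y \<inter> closure E = (subtopology euclidean Y) closure_of (Y \<inter> E)"
proof -
  have fr: "Y \<inter> frontier E \<subseteq> (subtopology euclidean Y) closure_of (Y \<inter> E)"
    using assms(2) unfolding cond_def frontier_of_def by blast
  have "Y \<inter> closure E \<subseteq> (subtopology euclidean Y) closure_of (Y \<inter> E)"
  proof
    fix x assume x: "x \<in> Y \<inter> closure E"
    show "x \<in> (subtopology euclidean Y) closure_of (Y \<inter> E)"
    proof (cases "x \<in> E")
      case True
      then show ?thesis using x closure_of_subset[of "Y \<inter> E" "subtopology euclidean Y"] by auto
    next
      case False
      then have "x \<in> Y \<inter> frontier E" using x assms(1) by (simp add: frontier_def interior_open)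
      then show ?thesis using fr by blast
    qed
  qed
  moreover have "(subtopology euclidean Y) closure_of (Y \<inter> E) \<subseteq> Y \<inter> closure E"
    by (simp add: closure_of_subtopology) (meson closure_mono inf_le2 order_trans le_infI2 subset_refl Int_lower1 Int_lower2 inf.bounded_iff)
  ultimately show ?thesis by blast
qed

lemma cond_Times:
  assumes "open E1" "open E2" "cond Y1 E1" "cond Y2 E2"
  shows "cond (Y1 \<times> Y2) (E1 \<times> E2)"
proof -
  have c: "connected ((Y1 \<times> Y2) \<inter> (E1 \<times> E2))"
    using assms(3,4) unfolding cond_def by (simp add: Times_Int_Times connected_Times)
  have "(Y1 \<times> Y2) \<inter> frontier (E1 \<times> E2) =
     (Y1 \<inter> frontier E1) \<times> (Y2 \<inter> closure E2) \<union> (Y1 \<inter> closure E1) \<times> (Y2 \<inter> frontier E2)"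
    using frontier_of_Times[of euclidean euclidean E1 E2] by auto
  also have "\<dots> = (subtopology euclidean Y1 frontier_of (Y1 \<inter> E1)) \<times> (subtopology euclidean Y2 closure_of (Y2 \<inter> E2))
      \<union> (subtopology euclidean Y1 closure_of (Y1 \<inter> E1)) \<times> (subtopology euclidean Y2 frontier_of (Y2 \<inter> E2))"
    using assms cond_closure[of E1 Y1] cond_closure[of E2 Y2] unfolding cond_def by simp
  also have "\<dots> = subtopology euclidean (Y1 \<times> Y2) frontier_of ((Y1 \<times> Y2) \<inter> (E1 \<times> E2))"
    by (metis frontier_of_Times prod_topology_subtopology_eu Times_Int_Times)
  finally show ?thesis using c by (simp add: cond_def)
qed

lemma cond_jn:
  assumes "cond Y E"
  shows "cond (jn ` Y) (jn ` E)"
proof -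
  have h: "homeomorphic_map euclidean euclidean jn" by (rule homeo_jn)
  have hs: "homeomorphic_map (subtopology euclidean Y) (subtopology euclidean (jn ` Y)) jn"
    by (rule homeomorphic_map_subtopologies[OF h]) simp
  have i: "jn ` Y \<inter> jn ` E = jn ` (Y \<inter> E)" by (simp add: image_Int inj_jn)
  have fr: "frontier (jn ` E) = jn ` frontier E"
    using homeomorphic_map_frontier_of[OF h, of E] by simp
  have rf: "subtopology euclidean (jn ` Y) frontier_of (jn ` (Y \<inter> E)) = jn ` (subtopology euclidean Y frontier_of (Y \<inter> E))"
    by (rule homeomorphic_map_frontier_of[OF hs]) auto
  have cc: "connected (jn ` (Y \<inter> E))"
    using assms unfolding cond_def
    by (meson connected_continuous_image cont_jn continuous_on_subset subset_UNIV)
  have i2: "jn ` Y \<inter> jn ` frontier E = jn ` (Y \<inter> frontier E)" by (simp add: image_Int inj_jn)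
  show ?thesis
    unfolding cond_def i fr rf i2 using assms cc unfolding cond_def
    by simp
qed


lemma sum_Plus_UNIV: "(\<Sum>i\<in>(UNIV::('n::finite+'m::finite) set). f i) = (\<Sum>a\<in>UNIV. f (Inl a)) + (\<Sum>b\<in>UNIV. f (Inr b))"
  by (simp add: sum.Plus flip: UNIV_Plus_UNIV)

lemma bd_mult: "block_diag g1 g2 *v jn (u, v) = jn (g1 *v u, g2 *v v)"
  by (simp add: vec_eq_iff jn_def block_diag_def matrix_vector_mult_def sum_Plus_UNIV split: sum.split)

lemma bd_mult': "block_diag g1 g2 *v x = jn (g1 *v lft x, g2 *v rgt x)"
  by (metis bd_mult jn_spl)

lemma fixset_bd: "fixset (block_diag g1 g2) = jn ` (fixset g1 \<times> fixset g2)"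
proof -
  have "x \<in> jn ` (fixset g1 \<times> fixset g2)" if "block_diag g1 g2 *v x = x" for x
    using that unfolding bd_mult' fixset_def
    by (metis (mono_tags, lifting) SigmaI image_eqI jn_inj jn_spl mem_Collect_eq)
  then show ?thesis by (auto simp: fixset_def bd_mult)
qed

lemma bd_inj: "block_diag a b = block_diag c d \<Longrightarrow> a = c \<and> b = d"
proof -
  assume h: "block_diag a b = block_diag c d"
  have "a $ i $ j = c $ i $ j" for i j
    using arg_cong[OF h, of "\<lambda>M. M $ Inl i $ Inl j"] by (simp add: block_diag_def)
  moreover have "b $ i $ j = d $ i $ j" for i j
    using arg_cong[OF h, of "\<lambda>M. M $ Inr i $ Inr j"] by (simp add: block_diag_def)
  ultimately show ?thesis by (simp add: vec_eq_iff)
qed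

definition lf :: "complex^('n::finite) \<Rightarrow> complex^'n \<Rightarrow> complex" where
  "lf a x = (\<Sum>i\<in>UNIV. a $ i * x $ i)"

lemma lf_jn: "lf a (jn (u,v)) = lf (lft a) u + lf (rgt a) v"
  by (simp add: lf_def sum_Plus_UNIV jn_def lft_def rgt_def)

lemma lf_scale: "lf a (c *s x) = c * lf a x"
  by (simp add: lf_def sum_distrib_left mult.assoc mult.left_commute)

lemma lf_zero[simp]: "lf a 0 = 0" by (simp add: lf_def)

lemma chyp_def': "chyperplane Y \<longleftrightarrow> (\<exists>a. a \<noteq> 0 \<and> Y = {x. lf a x = 0})"
  by (simp add: chyperplane_def lf_def)

lemma hyp_split:
  assumes "chyperplane (jn ` (F1 \<times> F2))"
  shows "F1 = UNIV \<or> F2 = UNIV"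
proof (rule ccontr)
  assume "\<not> ?thesis"
  then obtain x1 x2 where x1: "x1 \<notin> F1" and x2: "x2 \<notin> F2" by auto
  from assms obtain a where Y: "jn ` (F1 \<times> F2) = {x. lf a x = 0}" by (auto simp: chyp_def')
  have mem: "jn (u,v) \<in> jn ` (F1 \<times> F2) \<longleftrightarrow> u \<in> F1 \<and> v \<in> F2" for u v
    by (auto simp: image_iff)
  have al: "lf (lft a) x1 \<noteq> 0"
    using mem[of x1 0] x1 Y lf_jn[of a x1 0] by auto
  have be: "lf (rgt a) x2 \<noteq> 0"
    using mem[of 0 x2] x2 Y lf_jn[of a 0 x2] by auto
  define c where "c = - lf (lft a) x1 / lf (rgt a) x2"
  have "lf a (jn (x1, c *s x2)) = lf (lft a) x1 + c * lf (rgt a) x2"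
    by (simp only: lf_jn lf_scale)
  also have "\<dots> = 0" using be by (simp add: c_def)
  finally have "lf a (jn (x1, c *s x2)) = 0" .
  then have "jn (x1, c *s x2) \<in> jn ` (F1 \<times> F2)" using Y by auto
  then show False using mem x1 by blast
qed

lemma hyp_left:
  assumes "chyperplane (jn ` (F1 \<times> (UNIV::(complex^('m::finite)) set)))" and "F1 \<noteq> UNIV"
  shows "chyperplane (F1::(complex^('n::finite)) set)"
proof -
  from assms obtain a where Y: "jn ` (F1 \<times> (UNIV::(complex^'m) set)) = {x. lf a x = 0}" by (auto simp: chyp_def')
  have "F1 = {y. lf (lft a) y = 0}"
  proof -
    have "y \<in> F1 \<longleftrightarrow> jn (y, 0::complex^'m) \<in> jn ` (F1 \<times> UNIV)" for y by (auto simp: image_iff)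
    then show ?thesis using Y by (auto simp: lf_jn)
  qed
  moreover have "lft a \<noteq> 0"
    using assms(2) calculation by (auto simp: lf_def)
  ultimately show ?thesis by (auto simp: chyp_def')
qed

lemma hyp_right:
  assumes "chyperplane (jn ` ((UNIV::(complex^('n::finite)) set) \<times> F2))" and "F2 \<noteq> UNIV"
  shows "chyperplane (F2::(complex^('m::finite)) set)"
proof -
  from assms obtain a where Y: "jn ` ((UNIV::(complex^'n) set) \<times> F2) = {x. lf a x = 0}" by (auto simp: chyp_def')
  have "F2 = {y. lf (rgt a) y = 0}"
  proof -
    have "y \<in> F2 \<longleftrightarrow> jn (0::complex^'n, y) \<in> jn ` (UNIV \<times> F2)" for y by (auto simp: image_iff)
    then show ?thesis using Y by (auto simp: lf_jn)
  qed
  moreover have "rgt a \<noteq> 0"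
    using assms(2) calculation by (auto simp: lf_def)
  ultimately show ?thesis by (auto simp: chyp_def')
qed

lemma bd_iter: "((\<lambda>x. block_diag g1 g2 *v x) ^^ k) (jn (u,v)) = jn (((\<lambda>x. g1 *v x) ^^ k) u, ((\<lambda>x. g2 *v x) ^^ k) v)"
  by (induction k) (simp_all add: bd_mult)

lemma bd_order:
  assumes "(\<lambda>x. block_diag g1 g2 *v x) ^^ k = id"
  shows "(\<lambda>x. g1 *v x) ^^ k = id" "(\<lambda>x. g2 *v x) ^^ k = id"
proof -
  have "jn (((\<lambda>x. g1 *v x) ^^ k) u, ((\<lambda>x. g2 *v x) ^^ k) v) = jn (u, v)" for u v
    using bd_iter[of k g1 g2 u v] assms by simp
  then show "(\<lambda>x. g1 *v x) ^^ k = id" "(\<lambda>x. g2 *v x) ^^ k = id"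
    by (auto simp: fun_eq_iff)
qed




lemma bd_image: "(*v) (block_diag g1 g2) ` jn ` (A \<times> B) = jn ` (((*v) g1 ` A) \<times> ((*v) g2 ` B))"
  by (force simp: bd_mult image_iff)

lemma good_cond: "good G E \<Longrightarrow> Y \<in> reflecting_hyperplanes G \<Longrightarrow> cond Y E"
  by (simp add: good_def cond_def)

theorem proposition4p5:
  fixes G1 :: "('n::finite) cmat set" and G2 :: "('m::finite) cmat set"
    and E1 :: "(complex^'n) set" and E2 :: "(complex^'m) set"
  assumes "finite_unitary_reflection_group G1" and "finite_unitary_reflection_group G2"
    and "good G1 E1" and "good G2 E2"
  shows "good (prod_group G1 G2) (prod_set E1 E2)"
proof -
  have g1: "bounded E1" "open E1" "connected E1" "E1 \<noteq> {}" "invariant G1 E1"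
    using assms(3) by (auto simp: good_def domain_def)
  have g2: "bounded E2" "open E2" "connected E2" "E2 \<noteq> {}" "invariant G2 E2"
    using assms(4) by (auto simp: good_def domain_def)
  have u1': "\<forall>g\<in>G1. unitary g"
    using assms(1) unfolding finite_unitary_reflection_group_def by (rule conjunct1[OF conjunct2])
  have u2': "\<forall>g\<in>G2. unitary g"
    using assms(2) unfolding finite_unitary_reflection_group_def by (rule conjunct1[OF conjunct2])
  have u1: "\<And>g. g \<in> G1 \<Longrightarrow> unitary g" using u1' by blast
  have u2: "\<And>g. g \<in> G2 \<Longrightarrow> unitary g" using u2' by blast
  have PE: "prod_set E1 E2 = jn ` (E1 \<times> E2)" by (rule prod_set_jn)
  have bnd: "bounded (prod_set E1 E2)"
  proof -
    have "compact (closure (E1 \<times> E2))" using g1 g2 by (simp add: bounded_Times compact_closure)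
    then have "compact (jn ` closure (E1 \<times> E2))"
      by (rule compact_continuous_image[OF continuous_on_subset[OF cont_jn subset_UNIV]])
    then have "bounded (jn ` closure (E1 \<times> E2))" by (rule compact_imp_bounded)
    moreover have "jn ` (E1 \<times> E2) \<subseteq> jn ` closure (E1 \<times> E2)" by (intro image_mono closure_subset)
    ultimately show ?thesis unfolding PE by (rule bounded_subset)
  qed
  have opn: "open (prod_set E1 E2)"
  proof -
    have "prod_set E1 E2 = spl -` (E1 \<times> E2)"
      by (auto simp: prod_set_def spl_def lft_def rgt_def)
    moreover have "open (spl -` (E1 \<times> E2) :: (complex^('n+'m)) set)"
    proof (rule continuous_open_vimage[OF open_Times[OF g1(2) g2(2)]])
      fix x :: "complex^('n+'m)"
      show "continuous (at x) spl"
        using cont_spl continuous_on_eq_continuous_at open_UNIV UNIV_I by blast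
    qed
    ultimately show ?thesis by simp
  qed
  have con: "connected (prod_set E1 E2)"
    unfolding PE
    by (rule connected_continuous_image[OF continuous_on_subset[OF cont_jn subset_UNIV] connected_Times[OF g1(3) g2(3)]])
  have ne: "prod_set E1 E2 \<noteq> {}" unfolding PE using g1 g2 by auto
  have inv: "invariant (prod_group G1 G2) (prod_set E1 E2)"
    unfolding invariant_def prod_group_def PE
  proof clarify
    fix g1' g2' assume "g1' \<in> G1" "g2' \<in> G2"
    then show "(*v) (block_diag g1' g2') ` jn ` (E1 \<times> E2) = jn ` (E1 \<times> E2)"
      using g1(5) g2(5) by (simp add: bd_image invariant_def)
  qed
  have hyp: "cond Y (prod_set E1 E2)" if Y: "Y \<in> reflecting_hyperplanes (prod_group G1 G2)" for Y
  proof -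
    obtain g where g: "Y = fixset g" "g \<in> prod_group G1 G2" "reflection g"
      using Y by (auto simp: reflecting_hyperplanes_def)
    then obtain h1 h2 where h: "g = block_diag h1 h2" "h1 \<in> G1" "h2 \<in> G2"
      by (auto simp: prod_group_def)
    have YY: "Y = jn ` (fixset h1 \<times> fixset h2)" using g h fixset_bd by simp
    obtain k where k: "k > 0" "((*v) g ^^ k) = id" using g(3) by (auto simp: reflection_def)
    have hy: "chyperplane (jn ` (fixset h1 \<times> fixset h2))" using g(3) YY g(1) by (simp add: reflection_def)
    have c1: "cond (fixset h1) E1"
    proof (cases "fixset h1 = UNIV")
      case True then show ?thesis using g1 cond_UNIV by simp
    next
      case False
      then have "fixset h2 = UNIV" using hyp_split[OF hy] by simp
      then have "chyperplane (fixset h1)" using hyp_left[of "fixset h1"] hy False by simp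
      moreover have "((*v) h1 ^^ k) = id" using bd_order(1)[of k h1 h2] k h by simp
      ultimately have "reflection h1" using u1 h k by (auto simp: reflection_def)
      then have "fixset h1 \<in> reflecting_hyperplanes G1"
        using h by (auto simp: reflecting_hyperplanes_def)
      then show ?thesis using good_cond assms(3) by blast
    qed
    have c2: "cond (fixset h2) E2"
    proof (cases "fixset h2 = UNIV")
      case True then show ?thesis using g2 cond_UNIV by simp
    next
      case False
      then have "fixset h1 = UNIV" using hyp_split[OF hy] by simp
      then have "chyperplane (fixset h2)" using hyp_right[of "fixset h2"] hy False by simp
      moreover have "((*v) h2 ^^ k) = id" using bd_order(2)[of k h1 h2] k h by simp
      ultimately have "reflection h2" using u2 h k by (auto simp: reflection_def)
      then have "fixset h2 \<in> reflecting_hyperplanes G2"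
        using h by (auto simp: reflecting_hyperplanes_def)
      then show ?thesis using good_cond assms(4) by blast
    qed
    show ?thesis unfolding YY PE
      by (rule cond_jn[OF cond_Times[OF g1(2) g2(2) c1 c2]])
  qed
  show ?thesis
    unfolding good_def domain_def
    using bnd opn con ne inv hyp unfolding cond_def by blast
qed

end
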